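(* Let $\mathcal{A}$ be a $^*$-algebra with quadratic module $\mathcal{A}^+_{\mathrm H}$, let $\mathcal{J}\in\mathcal{A}_{\mathrm H}$, let $\mathcal{D}$ be a pre-Hilbert space and $\pi:\mathcal{A}\to\mathcal{L}^*(\mathcal{D})$ an injective $^*$-representation with $\mathcal{A}^+_{\mathrm H}=\pi^{-1}(\mathcal{L}^*(\mathcal{D})^+_{\mathrm H})$. For $\mu\in\mathbb{R}$ let $\mathcal{E}_\mu=\{\psi\in\mathcal{D}:\pi(\mathcal{J})\psi=\mu\psi\}$ and $\mathcal{E}_\mu^\perp$ its orthogonal complement in $\mathcal{D}$. Let $\mu\in\mathbb{R}$ and assume $\mathcal{D}=\mathcal{E}_\mu\oplus\mathcal{E}_\mu^\perp$ as vector spaces and that there is $\epsilon>0$ with $\langle\phi,\pi((\mathcal{J}-\mu\mathbb{1})^2)\phi\rangle\ge\epsilon\langle\phi,\phi\rangle$ for all $\phi\in\mathcal{E}_\mu^\perp$. Then $$(\mathcal{A}^{\mathfrak u_1})^+_{\mathrm H}+\big(\langle\mathcal{J}-\mu\rangle\big)_{\mathrm H}=\mathcal{R}_\mu=\{a\in(\mathcal{A}^{\mathfrak u_1})_{\mathrm H}:\langle\psi,\pi(a)\psi\rangle\ge0\text{ for all }\psi\in\mathcal{E}_\mu\},$$ and the reduced algebra $\mathcal{A}_{\mu\text{-red}}$ admits an injective $^*$-representation $\pi_{\mu\text{-red}}:\mathcal{A}_{\mu\text{-red}}\to\mathcal{L}^*(\mathcal{E}_\mu)$, given by $\pi_{\mu\text{-red}}([a]_\mu)\psi=\pi(a)\psi\in\mathcal{E}_\mu$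 for $\psi\in\mathcal{E}_\mu$, $a\in\mathcal{A}^{\mathfrak u_1}$, such that $(\mathcal{A}_{\mu\text{-red}})^+_{\mathrm H}=\pi_{\mu\text{-red}}^{-1}(\mathcal{L}^*(\mathcal{E}_\mu)^+_{\mathrm H})$.
   Context: A $^*$-algebra is a unital associative complex algebra with antilinear involution satisfying $(ab)^*=b^*a^*$; $\mathcal{A}_{\mathrm H}$ denotes its Hermitian elements. A quadratic module is a subset $Q\subseteq\mathcal{A}_{\mathrm H}$ with $Q+Q\subseteq Q$, $a^*Qa\subseteq Q$ for all $a$, and $\mathbb{1}\in Q$; its support is $\operatorname{supp}Q=Q\cap(-Q)$ and $\operatorname{supp}_{\mathbb C}Q=\operatorname{supp}Q+\mathrm{i}\operatorname{supp}Q$. Here $\mathcal{A}^+_{\mathrm H}$ is a quadratic module with $\operatorname{supp}\mathcal{A}^+_{\mathrm H}=\{0\}$. For a pre-Hilbert space $\mathcal{D}$, $\mathcal{L}^*(\mathcal{D})$ is the $^*$-algebra of adjointable linear endomorphisms and $\mathcal{L}^*(\mathcal{D})^+_{\mathrm H}=\{a\text{ Hermitian}:\langle\psi,a\psi\rangle\ge0\ \forall\psi\}$. $\mathcal{A}^{\mathfrak u_1}=\{a\in\mathcal{A}:a\mathcal{J}=\mathcal{J}a\}$ with $(\mathcal{A}^{\mathfrak u_1})^+_{\mathrm H}=\mathcal{A}^+_{\mathrm H}\cap\mathcal{A}^{\mathfrak u_1}$; $\langle\mathcal{J}-\mu\rangle$ is the $^*$-ideal of $\mathcal{A}^{\mathfrak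 u_1}$ generated by $\mathcal{J}-\mu\mathbb{1}$; for a set $S$, $S_{\mathrm H}=S\cap\mathcal{A}_{\mathrm H}$. A state on $\mathcal{A}^{\mathfrak u_1}$ is a linear functional $\omega$ with $\omega(\mathbb{1})=1$, real on Hermitian elements, nonnegative on $(\mathcal{A}^{\mathfrak u_1})^+_{\mathrm H}$; it is a $\mu$-eigenstate of $\mathcal{J}$ if $\omega((\mathcal{J}-\mu\mathbb{1})^*(\mathcal{J}-\mu\mathbb{1}))=0$. $\mathcal{R}_\mu=\{a\in(\mathcal{A}^{\mathfrak u_1})_{\mathrm H}:\omega(a)\ge0\text{ for all }\mu\text{-eigenstates }\omega\}$, $\mathcal{V}_\mu=\{a\in\mathcal{A}^{\mathfrak u_1}:\omega(a)=0\text{ for all }\mu\text{-eigenstates }\omega\}$. The reduced ordered $^*$-algebra is $\mathcal{A}_{\mu\text{-red}}=\mathcal{A}^{\mathfrak u_1}/\mathcal{V}_\mu$, $[\cdot]_\mu$ the quotient map, with positive cone $(\mathcal{A}_{\mu\text{-red}})^+_{\mathrm H}=\{[r]_\mu:r\in\mathcal{R}_\mu\}$. *)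

theory Defs
  imports Complex_Main "HOL-Library.Complex_Order"
begin

text \<open>Complex numbers are ordered via HOL-Library.Complex_Order:
  z \<le> w iff Re z \<le> Re w and Im z = Im w.  In particular 0 \<le> z means z is a
  nonnegative real number.\<close>

definition star_algebra :: "(complex \<Rightarrow> 'a::ring_1 \<Rightarrow> 'a) \<Rightarrow> ('a \<Rightarrow> 'a) \<Rightarrow> bool" where
  "star_algebra smul st \<longleftrightarrow>
     (\<forall>c a b. smul c (a + b) = smul c a + smul c b) \<and>
     (\<forall>c d a. smul (c + d) a = smul c a + smul d a) \<and>
     (\<forall>c d a. smul (c * d) a = smul c (smul d a)) \<and>
     (\<forall>a. smul 1 a = a) \<and>
     (\<forall>c a b. smul c (a * b) = smul c a * b \<and> smul c (a * b) = a * smul c b) \<and>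
     (\<forall>a b. st (a + b) = st a + st b) \<and>
     (\<forall>c a. st (smul c a) = smul (cnj c) (st a)) \<and>
     (\<forall>a. st (st a) = a) \<and>
     (\<forall>a b. st (a * b) = st b * st a)"

definition hermitian_part :: "('a \<Rightarrow> 'a) \<Rightarrow> 'a set \<Rightarrow> 'a set" where
  "hermitian_part st S = {a \<in> S. st a = a}"

definition quadratic_module :: "('a::ring_1 \<Rightarrow> 'a) \<Rightarrow> 'a set \<Rightarrow> bool" where
  "quadratic_module st Q \<longleftrightarrow>
     Q \<subseteq> {a. st a = a} \<and>
     (\<forall>x\<in>Q. \<forall>y\<in>Q. x + y \<in> Q) \<and>
     (\<forall>a. \<forall>q\<in>Q. st a * q * a \<in> Q) \<and>
     1 \<in> Q"

definition supp :: "'a::ab_group_add set \<Rightarrow> 'a set" where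
  "supp Q = Q \<inter> uminus ` Q"

text \<open>A pre-Hilbert space: complex vector space (carrier the whole type 'h) with an inner
  product, antilinear in the first and linear in the second argument.\<close>

definition pre_hilbert :: "(complex \<Rightarrow> 'h::ab_group_add \<Rightarrow> 'h) \<Rightarrow> ('h \<Rightarrow> 'h \<Rightarrow> complex) \<Rightarrow> bool" where
  "pre_hilbert hsmul inn \<longleftrightarrow>
     (\<forall>c x y. hsmul c (x + y) = hsmul c x + hsmul c y) \<and>
     (\<forall>c d x. hsmul (c + d) x = hsmul c x + hsmul d x) \<and>
     (\<forall>c d x. hsmul (c * d) x = hsmul c (hsmul d x)) \<and>
     (\<forall>x. hsmul 1 x = x) \<and>
     (\<forall>x y z. inn x (y + z) = inn x y + inn x z) \<and>
     (\<forall>c x y. inn x (hsmul c y) = c * inn x y) \<and>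
     (\<forall>x y. inn y x = cnj (inn x y)) \<and>
     (\<forall>x. 0 \<le> inn x x) \<and>
     (\<forall>x. inn x x = 0 \<longrightarrow> x = 0)"

text \<open>A *-representation rho of the *-algebra into L*(D): every rho a is linear, rho is linear,
  multiplicative and unital, and rho (st a) is the adjoint of rho a (so every rho a is
  adjointable, i.e. lies in L*(D)).\<close>

definition star_rep ::
  "(complex \<Rightarrow> 'a::ring_1 \<Rightarrow> 'a) \<Rightarrow> ('a \<Rightarrow> 'a) \<Rightarrow> (complex \<Rightarrow> 'h::ab_group_add \<Rightarrow> 'h) \<Rightarrow>
   ('h \<Rightarrow> 'h \<Rightarrow> complex) \<Rightarrow> ('a \<Rightarrow> 'h \<Rightarrow> 'h) \<Rightarrow> bool" where
  "star_rep smul st hsmul inn rho \<longleftrightarrow>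
     (\<forall>a x y. rho a (x + y) = rho a x + rho a y) \<and>
     (\<forall>a c x. rho a (hsmul c x) = hsmul c (rho a x)) \<and>
     (\<forall>a b x. rho (a + b) x = rho a x + rho b x) \<and>
     (\<forall>c a x. rho (smul c a) x = hsmul c (rho a x)) \<and>
     (\<forall>a b. rho (a * b) = rho a \<circ> rho b) \<and>
     rho 1 = id \<and>
     (\<forall>a x y. inn x (rho a y) = inn (rho (st a) x) y)"

text \<open>Positive Hermitian operators on a subspace S (for S = UNIV: L*(D)^+_H).\<close>

definition pos_op_on :: "'h set \<Rightarrow> ('h \<Rightarrow> 'h \<Rightarrow> complex) \<Rightarrow> ('h \<Rightarrow> 'h) \<Rightarrow> bool" where
  "pos_op_on S inn T \<longleftrightarrow>
     (\<forall>x\<in>S. \<forall>y\<in>S. inn x (T y) = inn (T x) y) \<and> (\<forall>x\<in>S. 0 \<le> inn x (T x))"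

definition eigenspace :: "(complex \<Rightarrow> 'h \<Rightarrow> 'h) \<Rightarrow> ('h \<Rightarrow> 'h) \<Rightarrow> real \<Rightarrow> 'h set" where
  "eigenspace hsmul T \<mu> = {x. T x = hsmul (of_real \<mu>) x}"

definition orth_compl :: "('h \<Rightarrow> 'h \<Rightarrow> complex) \<Rightarrow> 'h set \<Rightarrow> 'h set" where
  "orth_compl inn S = {y. \<forall>x\<in>S. inn x y = 0}"

definition u1 :: "'a::ring_1 \<Rightarrow> 'a set" where
  "u1 J = {a. a * J = J * a}"

definition star_ideal_in :: "(complex \<Rightarrow> 'a::ring_1 \<Rightarrow> 'a) \<Rightarrow> ('a \<Rightarrow> 'a) \<Rightarrow> 'a set \<Rightarrow> 'a set \<Rightarrow> bool" where
  "star_ideal_in smul st B I \<longleftrightarrow>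
     I \<subseteq> B \<and> 0 \<in> I \<and>
     (\<forall>x\<in>I. \<forall>y\<in>I. x + y \<in> I) \<and>
     (\<forall>c. \<forall>x\<in>I. smul c x \<in> I) \<and>
     (\<forall>b\<in>B. \<forall>x\<in>I. b * x \<in> I \<and> x * b \<in> I) \<and>
     (\<forall>x\<in>I. st x \<in> I)"

definition gen_star_ideal :: "(complex \<Rightarrow> 'a::ring_1 \<Rightarrow> 'a) \<Rightarrow> ('a \<Rightarrow> 'a) \<Rightarrow> 'a set \<Rightarrow> 'a \<Rightarrow> 'a set" where
  "gen_star_ideal smul st B g = \<Inter>{I. star_ideal_in smul st B I \<and> g \<in> I}"

text \<open>States on the *-subalgebra B with positive cone P \<inter> B.  Only the values on B matter.\<close>

definition is_state :: "(complex \<Rightarrow> 'a::ring_1 \<Rightarrow> 'a) \<Rightarrow> ('a \<Rightarrow> 'a) \<Rightarrow> 'a set \<Rightarrow> 'a set \<Rightarrow> ('a \<Rightarrow> complex) \<Rightarrow> bool" where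
  "is_state smul st P B \<omega> \<longleftrightarrow>
     (\<forall>a\<in>B. \<forall>b\<in>B. \<omega> (a + b) = \<omega> a + \<omega> b) \<and>
     (\<forall>c. \<forall>a\<in>B. \<omega> (smul c a) = c * \<omega> a) \<and>
     \<omega> 1 = 1 \<and>
     (\<forall>a\<in>B. st a = a \<longrightarrow> \<omega> a \<in> \<real>) \<and>
     (\<forall>a\<in>B \<inter> P. 0 \<le> \<omega> a)"

definition J_shift :: "(complex \<Rightarrow> 'a::ring_1 \<Rightarrow> 'a) \<Rightarrow> 'a \<Rightarrow> real \<Rightarrow> 'a" where
  "J_shift smul J \<mu> = J - smul (of_real \<mu>) 1"

definition eigenstate ::
  "(complex \<Rightarrow> 'a::ring_1 \<Rightarrow> 'a) \<Rightarrow> ('a \<Rightarrow> 'a) \<Rightarrow> 'a set \<Rightarrow> 'a \<Rightarrow> real \<Rightarrow> ('a \<Rightarrow> complex) \<Rightarrow> bool" where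
  "eigenstate smul st P J \<mu> \<omega> \<longleftrightarrow>
     is_state smul st P (u1 J) \<omega> \<and>
     \<omega> (st (J_shift smul J \<mu>) * J_shift smul J \<mu>) = 0"

definition R_mu :: "(complex \<Rightarrow> 'a::ring_1 \<Rightarrow> 'a) \<Rightarrow> ('a \<Rightarrow> 'a) \<Rightarrow> 'a set \<Rightarrow> 'a \<Rightarrow> real \<Rightarrow> 'a set" where
  "R_mu smul st P J \<mu> =
     {a \<in> hermitian_part st (u1 J). \<forall>\<omega>. eigenstate smul st P J \<mu> \<omega> \<longrightarrow> 0 \<le> \<omega> a}"

definition V_mu :: "(complex \<Rightarrow> 'a::ring_1 \<Rightarrow> 'a) \<Rightarrow> ('a \<Rightarrow> 'a) \<Rightarrow> 'a set \<Rightarrow> 'a \<Rightarrow> real \<Rightarrow> 'a set" where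
  "V_mu smul st P J \<mu> =
     {a \<in> u1 J. \<forall>\<omega>. eigenstate smul st P J \<mu> \<omega> \<longrightarrow> \<omega> a = 0}"

text \<open>The reduced algebra A_mu-red = A^{u1} / V_mu, realised as the set of cosets
  red_class a = a + V_mu (a in A^{u1}); its positive cone is the set of classes of
  elements of R_mu.\<close>

definition red_class :: "(complex \<Rightarrow> 'a::ring_1 \<Rightarrow> 'a) \<Rightarrow> ('a \<Rightarrow> 'a) \<Rightarrow> 'a set \<Rightarrow> 'a \<Rightarrow> real \<Rightarrow> 'a \<Rightarrow> 'a set" where
  "red_class smul st P J \<mu> a = {b \<in> u1 J. a - b \<in> V_mu smul st P J \<mu>}"

definition red_algebra :: "(complex \<Rightarrow> 'a::ring_1 \<Rightarrow> 'a) \<Rightarrow> ('a \<Rightarrow> 'a) \<Rightarrow> 'a set \<Rightarrow> 'a \<Rightarrow> real \<Rightarrow> 'a set set" where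
  "red_algebra smul st P J \<mu> = red_class smul st P J \<mu> ` u1 J"

definition red_pos_cone :: "(complex \<Rightarrow> 'a::ring_1 \<Rightarrow> 'a) \<Rightarrow> ('a \<Rightarrow> 'a) \<Rightarrow> 'a set \<Rightarrow> 'a \<Rightarrow> real \<Rightarrow> 'a set set" where
  "red_pos_cone smul st P J \<mu> = red_class smul st P J \<mu> ` R_mu smul st P J \<mu>"

end

theory Submission
  imports Defs
begin

locale setting =
  fixes smul :: "complex \<Rightarrow> 'a::ring_1 \<Rightarrow> 'a"
    and st :: "'a \<Rightarrow> 'a"
    and P :: "'a set"
    and J :: 'a
    and hsmul :: "complex \<Rightarrow> 'h::ab_group_add \<Rightarrow> 'h"
    and inn :: "'h \<Rightarrow> 'h \<Rightarrow> complex"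
    and pi :: "'a \<Rightarrow> 'h \<Rightarrow> 'h"
    and mu :: real
  assumes alg: "star_algebra smul st"
    and qm: "quadratic_module st P"
    and J_herm: "st J = J"
    and ph: "pre_hilbert hsmul inn"
    and rep: "star_rep smul st hsmul inn pi"
    and P_eq: "P = {a. pos_op_on UNIV inn (pi a)}"
    and decomp: "\<forall>x. \<exists>e\<in>eigenspace hsmul (pi J) mu.
                     \<exists>f\<in>orth_compl inn (eigenspace hsmul (pi J) mu). x = e + f"
    and gap: "\<exists>\<epsilon>>0. \<forall>f\<in>orth_compl inn (eigenspace hsmul (pi J) mu).
                 complex_of_real \<epsilon> * inn f f
                   \<le> inn f (pi (J_shift smul J mu * J_shift smul J mu) f)"
begin

lemma smul_add[simp]: "smul c (a + b) = smul c a + smul c b" using alg unfolding star_algebra_def by blast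
lemma smul_ladd: "smul (c + d) a = smul c a + smul d a" using alg unfolding star_algebra_def by blast
lemma smul_assoc[simp]: "smul c (smul d a) = smul (c * d) a" using alg unfolding star_algebra_def by simp
lemma smul_one[simp]: "smul 1 a = a" using alg unfolding star_algebra_def by blast
lemma smul_mult_left[simp]: "smul c a * b = smul c (a * b)" using alg unfolding star_algebra_def by simp
lemma smul_mult_right[simp]: "a * smul c b = smul c (a * b)" using alg unfolding star_algebra_def by simp
lemma st_add[simp]: "st (a + b) = st a + st b" using alg unfolding star_algebra_def by blast
lemma st_smul[simp]: "st (smul c a) = smul (cnj c) (st a)" using alg unfolding star_algebra_def by blast
lemma st_st[simp]: "st (st a) = a" using alg unfolding star_algebra_def by blast
lemma st_mult[simp]: "st (a * b) = st b * st a" using alg unfolding star_algebra_def by blast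

lemma smul_0[simp]: "smul 0 a = 0"
  using smul_ladd[of 0 0 a] by simp
lemma smul_zero[simp]: "smul c 0 = 0"
  using smul_add[of c 0 0] by simp
lemma smul_neg[simp]: "smul c (- a) = - smul c a"
  by (metis smul_add[of c a "-a"] add.right_inverse smul_zero add.inverse_unique)
lemma smul_diff[simp]: "smul c (a - b) = smul c a - smul c b"
  by (simp add: diff_conv_add_uminus del: add_uminus_conv_diff)
lemma smul_lneg: "smul (- c) a = - smul c a"
  by (metis smul_ladd[of c "-c" a] add.right_inverse smul_0 add.inverse_unique)
lemma st_0[simp]: "st 0 = 0"
  using st_add[of 0 0] by simp
lemma st_neg[simp]: "st (- a) = - st a"
  by (metis st_add[of a "-a"] add.right_inverse st_0 add.inverse_unique)
lemma st_diff[simp]: "st (a - b) = st a - st b"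
  by (simp add: diff_conv_add_uminus del: add_uminus_conv_diff)
lemma st_1[simp]: "st 1 = 1"
proof -
  have "1 = st (st 1 * 1)" by (simp only: mult_1_right st_st)
  also have "\<dots> = st 1 * st (st 1)" by (simp only: st_mult)
  also have "\<dots> = st 1" by (simp only: st_st mult_1_right)
  finally show ?thesis by (rule sym)
qed

lemma hsmul_add[simp]: "hsmul c (x + y) = hsmul c x + hsmul c y" using ph unfolding pre_hilbert_def by blast
lemma hsmul_ladd: "hsmul (c + d) x = hsmul c x + hsmul d x" using ph unfolding pre_hilbert_def by blast
lemma hsmul_assoc[simp]: "hsmul c (hsmul d x) = hsmul (c * d) x" using ph unfolding pre_hilbert_def by simp
lemma hsmul_one[simp]: "hsmul 1 x = x" using ph unfolding pre_hilbert_def by blast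
lemma inn_add[simp]: "inn x (y + z) = inn x y + inn x z" using ph unfolding pre_hilbert_def by blast
lemma inn_hsmul[simp]: "inn x (hsmul c y) = c * inn x y" using ph unfolding pre_hilbert_def by blast
lemma inn_sym: "inn y x = cnj (inn x y)" using ph unfolding pre_hilbert_def by blast
lemma inn_pos[simp]: "0 \<le> inn x x" using ph unfolding pre_hilbert_def by blast
lemma inn_zero: "inn x x = 0 \<Longrightarrow> x = 0" using ph unfolding pre_hilbert_def by blast
lemma hsmul_0[simp]: "hsmul 0 x = 0"
  using hsmul_ladd[of 0 0 x] by simp
lemma hsmul_zero[simp]: "hsmul c 0 = 0"
  using hsmul_add[of c 0 0] by simp
lemma hsmul_neg[simp]: "hsmul c (- x) = - hsmul c x"
  by (metis hsmul_add[of c x "-x"] add.right_inverse hsmul_zero add.inverse_unique)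
lemma hsmul_diff[simp]: "hsmul c (x - y) = hsmul c x - hsmul c y"
  by (simp add: diff_conv_add_uminus del: add_uminus_conv_diff)
lemma inn_add_left[simp]: "inn (x + y) z = inn x z + inn y z"
  by (metis inn_sym inn_add complex_cnj_add)
lemma inn_hsmul_left[simp]: "inn (hsmul c x) y = cnj c * inn x y"
  by (metis inn_sym inn_hsmul complex_cnj_mult)
lemma inn_0_right[simp]: "inn x 0 = 0"
  using inn_add[of x 0 0] by simp
lemma inn_0_left[simp]: "inn 0 x = 0"
  using inn_add_left[of 0 0 x] by simp
lemma inn_neg[simp]: "inn x (- y) = - inn x y"
  by (metis inn_add[of x y "-y"] add.right_inverse inn_0_right add.inverse_unique)
lemma inn_neg_left[simp]: "inn (- x) y = - inn x y"
  by (metis inn_add_left[of x "-x" y] add.right_inverse inn_0_left add.inverse_unique)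
lemma inn_diff[simp]: "inn x (y - z) = inn x y - inn x z"
  by (simp add: diff_conv_add_uminus del: add_uminus_conv_diff)
lemma inn_diff_left[simp]: "inn (x - y) z = inn x z - inn y z"
  by (simp add: diff_conv_add_uminus del: add_uminus_conv_diff)
lemma inn_zero_iff[simp]: "inn x x = 0 \<longleftrightarrow> x = 0"
  using inn_zero by auto

lemma pi_addv[simp]: "pi a (x + y) = pi a x + pi a y" using rep unfolding star_rep_def by blast
lemma pi_hsmul[simp]: "pi a (hsmul c x) = hsmul c (pi a x)" using rep unfolding star_rep_def by blast
lemma pi_add[simp]: "pi (a + b) x = pi a x + pi b x" using rep unfolding star_rep_def by blast
lemma pi_smul[simp]: "pi (smul c a) x = hsmul c (pi a x)" using rep unfolding star_rep_def by blast
lemma pi_mult[simp]: "pi (a * b) x = pi a (pi b x)" using rep unfolding star_rep_def by simp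
lemma pi_1[simp]: "pi 1 x = x" using rep unfolding star_rep_def by simp
lemma pi_adj: "inn x (pi a y) = inn (pi (st a) x) y" using rep unfolding star_rep_def by blast
lemma pi_0v[simp]: "pi a 0 = 0"
  using pi_addv[of a 0 0] by simp
lemma pi_0[simp]: "pi 0 x = 0"
  using pi_add[of 0 0 x] by simp
lemma pi_negv[simp]: "pi a (- x) = - pi a x"
  by (metis pi_addv[of a x "-x"] add.right_inverse pi_0v add.inverse_unique)
lemma pi_neg[simp]: "pi (- a) x = - pi a x"
  by (metis pi_add[of a "-a" x] add.right_inverse pi_0 add.inverse_unique)
lemma pi_diffv[simp]: "pi a (x - y) = pi a x - pi a y"
  by (simp add: diff_conv_add_uminus del: add_uminus_conv_diff)
lemma pi_diff[simp]: "pi (a - b) x = pi a x - pi b x"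
  by (simp add: diff_conv_add_uminus del: add_uminus_conv_diff)
lemma pi_adj': "inn (pi a x) y = inn x (pi (st a) y)"
  using pi_adj[of x "st a" y] by simp


abbreviation "E \<equiv> eigenspace hsmul (pi J) mu"
abbreviation "F \<equiv> orth_compl inn E"
abbreviation "K \<equiv> J_shift smul J mu"
abbreviation "U \<equiv> u1 J"

lemma E_iff: "x \<in> E \<longleftrightarrow> pi J x = hsmul (of_real mu) x"
  unfolding eigenspace_def by simp
lemma F_iff: "y \<in> F \<longleftrightarrow> (\<forall>x\<in>E. inn x y = 0)"
  unfolding orth_compl_def by simp
lemma U_iff: "a \<in> U \<longleftrightarrow> a * J = J * a"
  unfolding u1_def by simp

lemma U_add: "a \<in> U \<Longrightarrow> b \<in> U \<Longrightarrow> a + b \<in> U"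
  by (simp add: U_iff algebra_simps)
lemma U_mult: "a \<in> U \<Longrightarrow> b \<in> U \<Longrightarrow> a * b \<in> U"
  by (simp add: U_iff) (metis mult.assoc)
lemma U_smul: "a \<in> U \<Longrightarrow> smul c a \<in> U"
  by (simp add: U_iff)
lemma U_st: "a \<in> U \<Longrightarrow> st a \<in> U"
  by (simp add: U_iff) (metis st_mult J_herm)
lemma U_1[simp]: "1 \<in> U"
  by (simp add: U_iff)
lemma U_0[simp]: "0 \<in> U"
  by (simp add: U_iff)
lemma U_J[simp]: "J \<in> U"
  by (simp add: U_iff)
lemma U_neg: "a \<in> U \<Longrightarrow> - a \<in> U"
  by (simp add: U_iff)
lemmas U_intros = U_add U_mult U_smul U_st U_neg

lemma U_diff: "a \<in> U \<Longrightarrow> b \<in> U \<Longrightarrow> a - b \<in> U"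
  by (simp add: U_iff algebra_simps)
lemma K_def': "K = J - smul (of_real mu) 1"
  unfolding J_shift_def by simp
lemma U_K[simp]: "K \<in> U"
  unfolding K_def' by (intro U_diff U_smul U_J U_1)
lemma K_herm[simp]: "st K = K"
  unfolding K_def' by (simp add: J_herm)
lemma K_comm: "b \<in> U \<Longrightarrow> K * b = b * K"
  unfolding K_def' by (simp add: U_iff algebra_simps)

lemma pi_K: "pi K x = pi J x - hsmul (of_real mu) x"
  unfolding K_def' by simp
lemma pi_K_E: "x \<in> E \<Longrightarrow> pi K x = 0"
  by (simp add: pi_K E_iff)

lemma E_add: "x \<in> E \<Longrightarrow> y \<in> E \<Longrightarrow> x + y \<in> E"
  by (simp add: E_iff)
lemma E_hsmul: "x \<in> E \<Longrightarrow> hsmul c x \<in> E"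
  by (simp add: E_iff mult.commute)
lemma E_0[simp]: "0 \<in> E"
  by (simp add: E_iff)
lemma E_diff: "x \<in> E \<Longrightarrow> y \<in> E \<Longrightarrow> x - y \<in> E"
  by (simp add: E_iff)

lemma pi_U_E: "a \<in> U \<Longrightarrow> x \<in> E \<Longrightarrow> pi a x \<in> E"
proof -
  assume a: "a \<in> U" and x: "x \<in> E"
  have "pi J (pi a x) = pi (J * a) x" by simp
  also have "\<dots> = pi (a * J) x" using a by (simp add: U_iff)
  also have "\<dots> = hsmul (of_real mu) (pi a x)" using x by (simp add: E_iff)
  finally show ?thesis by (simp add: E_iff)
qed

lemma pi_U_F: "a \<in> U \<Longrightarrow> f \<in> F \<Longrightarrow> pi a f \<in> F"
proof -
  assume a: "a \<in> U" and f: "f \<in> F"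
  show ?thesis unfolding F_iff
  proof
    fix x assume x: "x \<in> E"
    have "inn x (pi a f) = inn (pi (st a) x) f" by (rule pi_adj)
    also have "\<dots> = 0" using f pi_U_E[OF U_st[OF a] x] by (simp add: F_iff)
    finally show "inn x (pi a f) = 0" .
  qed
qed

lemma inn_E_F: "x \<in> E \<Longrightarrow> f \<in> F \<Longrightarrow> inn x f = 0"
  by (simp add: F_iff)
lemma inn_F_E: "x \<in> E \<Longrightarrow> f \<in> F \<Longrightarrow> inn f x = 0"
  using inn_sym[of f x] by (simp add: F_iff)

lemma herm_real: "st a = a \<Longrightarrow> cnj (inn x (pi a x)) = inn x (pi a x)"
  by (metis inn_sym pi_adj)

lemma inn_stc: "inn x (pi (st c * c) x) = inn (pi c x) (pi c x)"
  using pi_adj[of x "st c" "pi c x"] by simp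

lemma E_self_perp: "y \<in> E \<Longrightarrow> (\<forall>x\<in>E. inn x y = 0) \<Longrightarrow> y = 0"
  by auto

lemma polar:
  assumes c: "c \<in> U" and h: "\<forall>x\<in>E. inn x (pi c x) = 0" and y: "y \<in> E"
  shows "pi c y = 0"
proof -
  have B: "inn x (pi c y) = 0" if x: "x \<in> E" for x
  proof -
    have 1: "inn (x + y) (pi c (x + y)) = 0" using h E_add[OF x y] by blast
    have 2: "inn (x + hsmul \<i> y) (pi c (x + hsmul \<i> y)) = 0" using h E_add[OF x E_hsmul[OF y]] by blast
    have hx: "inn x (pi c x) = 0" and hy: "inn y (pi c y) = 0" using h x y by auto
    from 1 hx hy have s1: "inn x (pi c y) + inn y (pi c x) = 0" by (simp add: ac_simps)
    from 2 hx hy have s2: "\<i> * inn x (pi c y) - \<i> * inn y (pi c x) = 0" by simp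
    from s2 have "\<i> * (inn x (pi c y) - inn y (pi c x)) = 0" by (simp add: right_diff_distrib)
    hence "inn y (pi c x) = inn x (pi c y)" by simp
    with s1 have "2 * inn x (pi c y) = 0" by simp
    thus ?thesis by simp
  qed
  show ?thesis using B[OF pi_U_E[OF c y]] by simp
qed


lemma P_herm: "a \<in> P \<Longrightarrow> st a = a"
  using qm unfolding quadratic_module_def by blast
lemma P_pos: "a \<in> P \<Longrightarrow> 0 \<le> inn x (pi a x)"
  using P_eq unfolding pos_op_on_def by blast
lemma P_stzz: "st z * z \<in> P"
  using qm unfolding quadratic_module_def by (metis mult_1_right)

lemma P_char:
  assumes h: "st x = x" and xU: "x \<in> U"
    and pe: "\<forall>e\<in>E. 0 \<le> inn e (pi x e)" and pf: "\<forall>f\<in>F. 0 \<le> inn f (pi x f)"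
  shows "x \<in> P"
proof -
  have sym: "inn u (pi x w) = inn (pi x u) w" for u w
    using pi_adj[of u x w] h by simp
  have pos: "0 \<le> inn v (pi x v)" for v
  proof -
    obtain e f where e: "e \<in> E" and f: "f \<in> F" and v: "v = e + f" using decomp by blast
    have "inn v (pi x v) = inn e (pi x e) + inn e (pi x f) + (inn f (pi x e) + inn f (pi x f))"
      using v by simp
    also have "\<dots> = inn e (pi x e) + inn f (pi x f)"
      using inn_E_F[OF e pi_U_F[OF xU f]] inn_F_E[OF pi_U_E[OF xU e] f] by simp
    finally show ?thesis using pe pf e f by (simp add: add_nonneg_nonneg)
  qed
  show ?thesis unfolding P_eq pos_op_on_def using sym pos by simp
qed

lemma nonneg_div:
  fixes p r :: complex
  assumes "0 \<le> p" "0 \<le> r" shows "0 \<le> p / r"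
  using assms by (auto simp: less_eq_complex_def Re_divide Im_divide)

definition vstate :: "'h \<Rightarrow> 'a \<Rightarrow> complex" where
  "vstate psi a = inn psi (pi a psi) / inn psi psi"

lemma vstate_eig:
  assumes psi: "psi \<in> E" "psi \<noteq> 0"
  shows "eigenstate smul st P J mu (vstate psi)"
proof -
  have r0: "inn psi psi \<noteq> 0" using psi by simp
  have rR: "inn psi psi \<in> \<real>" by (simp add: nonnegative_complex_is_real)
  have st: "is_state smul st P U (vstate psi)"
    unfolding is_state_def vstate_def
  proof (intro conjI ballI allI impI)
    fix a b show "inn psi (pi (a + b) psi) / inn psi psi = inn psi (pi a psi) / inn psi psi + inn psi (pi b psi) / inn psi psi"
      by (simp add: add_divide_distrib)
  next
    fix c a show "inn psi (pi (smul c a) psi) / inn psi psi = c * (inn psi (pi a psi) / inn psi psi)"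
      by simp
  next
    show "inn psi (pi 1 psi) / inn psi psi = 1" using r0 by simp
  next
    fix a assume "st a = a"
    hence "inn psi (pi a psi) \<in> \<real>" using herm_real by (metis Reals_cnj_iff)
    thus "inn psi (pi a psi) / inn psi psi \<in> \<real>" using rR by (simp add: Reals_divide)
  next
    fix a assume "a \<in> U \<inter> P"
    thus "0 \<le> inn psi (pi a psi) / inn psi psi" by (intro nonneg_div P_pos inn_pos) auto
  qed
  show ?thesis unfolding eigenstate_def using st pi_K_E[OF psi(1)] by (simp add: vstate_def)
qed

lemma R_sub_T:
  assumes a: "a \<in> R_mu smul st P J mu" and psi: "psi \<in> E"
  shows "0 \<le> inn psi (pi a psi)"
proof (cases "psi = 0")
  case True thus ?thesis by simp
next
  case False
  have "0 \<le> vstate psi a" using a vstate_eig[OF psi False] unfolding R_mu_def by blast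
  hence "0 \<le> vstate psi a * inn psi psi" by (simp add: mult_nonneg_nonneg)
  thus ?thesis using False by (simp add: vstate_def)
qed

lemma V_zero:
  assumes c: "c \<in> V_mu smul st P J mu" and y: "y \<in> E"
  shows "pi c y = 0"
proof -
  have cU: "c \<in> U" using c unfolding V_mu_def by blast
  have "inn x (pi c x) = 0" if x: "x \<in> E" for x
  proof (cases "x = 0")
    case True thus ?thesis by simp
  next
    case False
    have "vstate x c = 0" using c vstate_eig[OF x False] unfolding V_mu_def by blast
    thus ?thesis using False by (simp add: vstate_def)
  qed
  thus ?thesis using polar[OF cU] y by blast
qed

definition I0 :: "'a set" where "I0 = {b * K | b. b \<in> U}"

lemma I0_ideal: "star_ideal_in smul st U I0"
proof -
  have A: "I0 \<subseteq> U" unfolding I0_def by (auto simp: U_mult)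
  have B: "0 \<in> I0" unfolding I0_def by (intro CollectI exI[of _ 0]) simp
  have C: "x + y \<in> I0" if hx: "x \<in> I0" "y \<in> I0" for x y
  proof -
    obtain b c where "b \<in> U" "c \<in> U" "x = b * K" "y = c * K" using hx unfolding I0_def by blast
    thus "x + y \<in> I0" unfolding I0_def by (intro CollectI exI[of _ "b + c"]) (auto simp: distrib_right U_add)
  qed
  have D: "smul d x \<in> I0" if hx: "x \<in> I0" for d x
  proof -
    obtain b where "b \<in> U" "x = b * K" using hx unfolding I0_def by blast
    thus "smul d x \<in> I0" unfolding I0_def by (intro CollectI exI[of _ "smul d b"]) (auto simp: U_smul)
  qed
  have G: "c * x \<in> I0 \<and> x * c \<in> I0" if c: "c \<in> U" and hx: "x \<in> I0" for c x
  proof -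
    obtain b where b: "b \<in> U" "x = b * K" using hx unfolding I0_def by blast
    have 1: "c * x \<in> I0" unfolding I0_def using b c by (intro CollectI exI[of _ "c * b"]) (auto simp: mult.assoc U_mult)
    have "x * c = (b * c) * K" using b K_comm[OF c] by (simp add: mult.assoc)
    hence 2: "x * c \<in> I0" unfolding I0_def using U_mult[OF b(1) c] by blast
    show ?thesis using 1 2 by blast
  qed
  have H: "st x \<in> I0" if hx: "x \<in> I0" for x
  proof -
    obtain b where b: "b \<in> U" "x = b * K" using hx unfolding I0_def by blast
    have "st x = st b * K" using b K_comm[OF U_st[OF b(1)]] by simp
    thus "st x \<in> I0" unfolding I0_def using U_st[OF b(1)] by blast
  qed
  have C': "\<forall>x\<in>I0. \<forall>y\<in>I0. x + y \<in> I0" using C by blast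
  have D': "\<forall>d. \<forall>x\<in>I0. smul d x \<in> I0" using D by blast
  have G': "\<forall>b\<in>U. \<forall>x\<in>I0. b * x \<in> I0 \<and> x * b \<in> I0" using G by blast
  have H': "\<forall>x\<in>I0. st x \<in> I0" using H by blast
  show ?thesis unfolding star_ideal_in_def using A B C' D' G' H' by (intro conjI)
qed

lemma K_I0: "K \<in> I0"
  unfolding I0_def by (intro CollectI exI[of _ 1]) simp

lemma gen_sub_I0: "gen_star_ideal smul st U K \<subseteq> I0"
  unfolding gen_star_ideal_def using I0_ideal K_I0 by blast

lemma scalar_lemma:
  fixes A s :: complex
  assumes h: "\<forall>t::real. 0 \<le> A + of_real t * s"
  shows "s = 0"
proof -
  have h0: "0 \<le> A" using h[rule_format, of 0] by simp
  have h1: "0 \<le> A + s" using h[rule_format, of 1] by simp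
  have ims: "Im s = 0" using h0 h1 by (auto simp: less_eq_complex_def)
  have res: "Re s = 0"
  proof (rule ccontr)
    assume ne: "Re s \<noteq> 0"
    define t where "t = - (Re A + 1) / Re s"
    have "0 \<le> Re (A + of_real t * s)" using h[rule_format, of t] by (simp add: less_eq_complex_def)
    also have "Re (A + of_real t * s) = Re A + t * Re s" by simp
    also have "\<dots> = -1" using ne by (simp add: t_def)
    finally show False by simp
  qed
  show ?thesis using ims res by (simp add: complex_eq_iff)
qed

lemma state_basics:
  assumes w: "is_state smul st P U \<omega>"
  shows "\<And>a b. a \<in> U \<Longrightarrow> b \<in> U \<Longrightarrow> \<omega> (a + b) = \<omega> a + \<omega> b"
    and "\<And>c a. a \<in> U \<Longrightarrow> \<omega> (smul c a) = c * \<omega> a"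
    and "\<And>a. a \<in> U \<Longrightarrow> a \<in> P \<Longrightarrow> 0 \<le> \<omega> a"
  using w unfolding is_state_def by auto

lemma state_neg:
  assumes w: "is_state smul st P U \<omega>" and a: "a \<in> U"
  shows "\<omega> (- a) = - \<omega> a"
proof -
  have "\<omega> (smul (-1) a) = - \<omega> a" using state_basics(2)[OF w a, of "-1"] by simp
  thus ?thesis using smul_lneg[of 1 a] by simp
qed

lemma eig_vanish:
  assumes eig: "eigenstate smul st P J mu \<omega>" and b: "b \<in> U"
  shows "\<omega> (b * K) = 0"
proof -
  have w: "is_state smul st P U \<omega>" using eig unfolding eigenstate_def by blast
  have kk: "\<omega> (K * K) = 0" using eig unfolding eigenstate_def by simp
  note add = state_basics(1)[OF w] and sm = state_basics(2)[OF w] and pos = state_basics(3)[OF w]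
  have sb: "st b \<in> U" using b by (rule U_st)
  have main: "0 \<le> \<omega> (b * st b) + \<tau> * \<omega> (b * K) + cnj \<tau> * \<omega> (K * st b)" for \<tau>
  proof -
    define z where "z = st b + smul \<tau> K"
    have zU: "z \<in> U" unfolding z_def using sb by (simp add: U_add U_smul)
    have exp: "st z * z = b * st b + smul \<tau> (b * K) + smul (cnj \<tau>) (K * st b) + smul (cnj \<tau> * \<tau>) (K * K)"
      unfolding z_def by (simp add: distrib_left distrib_right add.assoc mult.commute)
    have "0 \<le> \<omega> (st z * z)" using pos[OF U_mult[OF U_st[OF zU] zU] P_stzz] .
    also have "\<omega> (st z * z) = \<omega> (b * st b) + \<tau> * \<omega> (b * K) + cnj \<tau> * \<omega> (K * st b)"
      unfolding exp using b sb kk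
      by (simp add: add sm U_add U_smul U_mult)
    finally show ?thesis .
  qed
  have s1: "\<omega> (b * K) + \<omega> (K * st b) = 0"
  proof (rule scalar_lemma[of "\<omega> (b * st b)"], rule allI)
    fix t :: real
    have "0 \<le> \<omega> (b * st b) + (of_real t) * \<omega> (b * K) + cnj (of_real t) * \<omega> (K * st b)"
      by (rule main)
    thus "0 \<le> \<omega> (b * st b) + of_real t * (\<omega> (b * K) + \<omega> (K * st b))"
      by (simp add: distrib_left add.assoc)
  qed
  have s2: "\<i> * \<omega> (b * K) - \<i> * \<omega> (K * st b) = 0"
  proof (rule scalar_lemma[of "\<omega> (b * st b)"], rule allI)
    fix t :: real
    have "0 \<le> \<omega> (b * st b) + (\<i> * of_real t) * \<omega> (b * K) + cnj (\<i> * of_real t) * \<omega> (K * st b)"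
      by (rule main)
    thus "0 \<le> \<omega> (b * st b) + of_real t * (\<i> * \<omega> (b * K) - \<i> * \<omega> (K * st b))"
      by (simp add: algebra_simps)
  qed
  from s2 have "\<i> * (\<omega> (b * K) - \<omega> (K * st b)) = 0" by (simp add: right_diff_distrib)
  hence "\<omega> (K * st b) = \<omega> (b * K)" by simp
  with s1 have "2 * \<omega> (b * K) = 0" by simp
  thus ?thesis by simp
qed


lemma S_sub_R:
  assumes x: "x \<in> P \<inter> U" and y: "y \<in> hermitian_part st (gen_star_ideal smul st U K)"
  shows "x + y \<in> R_mu smul st P J mu"
proof -
  have yI: "y \<in> I0" and yh: "st y = y" using y gen_sub_I0 unfolding hermitian_part_def by auto
  obtain b where b: "b \<in> U" "y = b * K" using yI unfolding I0_def by blast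
  have yU: "y \<in> U" using b by (simp add: U_mult)
  have xU: "x \<in> U" and xP: "x \<in> P" using x by auto
  have xh: "st x = x" using P_herm[OF xP] .
  have H: "x + y \<in> hermitian_part st U" unfolding hermitian_part_def using xU yU xh yh by (simp add: U_add)
  have "0 \<le> \<omega> (x + y)" if eig: "eigenstate smul st P J mu \<omega>" for \<omega>
  proof -
    have w: "is_state smul st P U \<omega>" using eig unfolding eigenstate_def by blast
    have "\<omega> (x + y) = \<omega> x + \<omega> y" using state_basics(1)[OF w xU yU] .
    also have "\<omega> y = 0" using eig_vanish[OF eig b(1)] b(2) by simp
    finally show ?thesis using state_basics(3)[OF w xU xP] by simp
  qed
  thus ?thesis unfolding R_mu_def using H by blast
qed

lemma T_sub_S:
  assumes aU: "a \<in> U" and ah: "st a = a" and aT: "\<forall>psi\<in>E. 0 \<le> inn psi (pi a psi)"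
  shows "\<exists>x y. a = x + y \<and> x \<in> P \<inter> U \<and> y \<in> hermitian_part st (gen_star_ideal smul st U K)"
proof -
  obtain \<epsilon> where ep: "\<epsilon> > 0" and g: "\<forall>f\<in>F. complex_of_real \<epsilon> * inn f f \<le> inn f (pi (K * K) f)"
    using gap by blast
  define lam where "lam = 1 / (2 * \<epsilon>)"
  have lam0: "lam > 0" using ep by (simp add: lam_def)
  have lamep: "lam * \<epsilon> = 1 / 2" using ep by (simp add: lam_def)
  define w where "w = K * K + (a * K) * (K * a)"
  define x where "x = a + smul (of_real lam) w"
  define y where "y = smul (- of_real lam) w"
  have KaU: "K * a \<in> U" "a * K \<in> U" using aU by (simp_all add: U_mult)
  have wU: "w \<in> U" unfolding w_def using KaU by (simp add: U_mult U_add)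
  have wh: "st w = w" unfolding w_def using ah by (simp add: mult.assoc)
  have xU: "x \<in> U" unfolding x_def using aU wU by (simp add: U_add U_smul)
  have xh: "st x = x" unfolding x_def using ah wh by simp
  have pwE: "pi w e = 0" if e: "e \<in> E" for e
    unfolding w_def using pi_K_E[OF e] pi_K_E[OF pi_U_E[OF aU e]] by simp
  have xE: "\<forall>e\<in>E. 0 \<le> inn e (pi x e)"
  proof
    fix e assume e: "e \<in> E"
    have "inn e (pi x e) = inn e (pi a e)" unfolding x_def using pwE[OF e] by simp
    thus "0 \<le> inn e (pi x e)" using aT e by simp
  qed
  have xF: "\<forall>f\<in>F. 0 \<le> inn f (pi x f)"
  proof
    fix f assume f: "f \<in> F"
    define g where "g = pi a f"
    have gF: "g \<in> F" unfolding g_def by (rule pi_U_F[OF aU f])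
    have g1: "of_real \<epsilon> * inn f f \<le> inn f (pi K (pi K f))" using g f by simp
    have g2: "of_real \<epsilon> * inn g g \<le> inn g (pi K (pi K g))" using g gF by simp
    have sw: "inn f (pi a (pi K (pi K (pi a f)))) = inn g (pi K (pi K g))"
      unfolding g_def using pi_adj'[of a f "pi K (pi K (pi a f))"] ah by simp
    have wf: "inn f (pi w f) = inn f (pi K (pi K f)) + inn g (pi K (pi K g))"
      unfolding w_def using sw by simp
    have cross: "inn g f = inn f g"
      unfolding g_def using pi_adj'[of a f f] ah by simp
    have ex: "inn (f + g) (f + g) = inn f f + inn f g + (inn f g + inn g g)"
      using cross by simp
    have 1: "of_real \<epsilon> * (inn f f + inn g g) \<le> inn f (pi w f)"
      unfolding wf distrib_left by (rule add_mono[OF g1 g2])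
    have 2: "of_real lam * (of_real \<epsilon> * (inn f f + inn g g)) \<le> of_real lam * inn f (pi w f)"
      by (rule mult_left_mono[OF 1]) (simp add: less_eq_complex_def lam0 less_imp_le)
    have 3: "of_real lam * (of_real \<epsilon> * (inn f f + inn g g)) = (inn f f + inn g g) / 2"
    proof -
      have "of_real lam * (of_real \<epsilon> * (inn f f + inn g g)) = of_real (lam * \<epsilon>) * (inn f f + inn g g)"
        by (simp add: mult.assoc)
      also have "\<dots> = (inn f f + inn g g) / 2"
      proof -
        have h: "complex_of_real (lam * \<epsilon>) = complex_of_real (1 / 2)" by (simp only: lamep)
        show ?thesis unfolding h by simp
      qed
      finally show ?thesis .
    qed
    have 4: "0 \<le> (inn f f + inn f g + (inn f g + inn g g)) / 2"
      using nonneg_div[OF inn_pos[of "f + g"], of 2] ex by (simp add: less_eq_complex_def)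
    have 5: "(inn f f + inn f g + (inn f g + inn g g)) / 2 = inn f g + (inn f f + inn g g) / 2"
      by (simp add: add_divide_distrib)
    have 6: "inn f (pi x f) = inn f g + of_real lam * inn f (pi w f)"
      unfolding x_def g_def by simp
    have "0 \<le> inn f g + (inn f f + inn g g) / 2" using 4 unfolding 5 .
    also have "\<dots> \<le> inn f g + of_real lam * inn f (pi w f)" using 2 3 by (simp add: add_left_mono)
    finally show "0 \<le> inn f (pi x f)" using 6 by simp
  qed
  have xP: "x \<in> P" by (rule P_char[OF xh xU xE xF])
  have yI: "y \<in> gen_star_ideal smul st U K"
    unfolding gen_star_ideal_def
  proof (rule InterI, clarify)
    fix I assume I: "star_ideal_in smul st U I" and KI: "K \<in> I"
    have add: "\<And>u v. u \<in> I \<Longrightarrow> v \<in> I \<Longrightarrow> u + v \<in> I"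
      and sm: "\<And>c u. u \<in> I \<Longrightarrow> smul c u \<in> I"
      and ml: "\<And>b u. b \<in> U \<Longrightarrow> u \<in> I \<Longrightarrow> b * u \<in> I"
      and mr: "\<And>b u. b \<in> U \<Longrightarrow> u \<in> I \<Longrightarrow> u * b \<in> I"
      using I unfolding star_ideal_in_def by auto
    have "K * K \<in> I" using mr[OF U_K KI] .
    moreover have "(a * K) * (K * a) \<in> I" using mr[OF KaU(1) ml[OF aU KI]] .
    ultimately have "w \<in> I" unfolding w_def by (rule add)
    thus "y \<in> I" unfolding y_def by (rule sm)
  qed
  have yh: "st y = y" unfolding y_def using wh by simp
  have "a = x + y" unfolding x_def y_def using smul_lneg[of "of_real lam" w] by simp
  thus ?thesis using xP xU yI yh unfolding hermitian_part_def by blast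
qed


abbreviation "Tset \<equiv> {a \<in> hermitian_part st U. \<forall>x\<in>E. 0 \<le> inn x (pi a x)}"
abbreviation "Sset \<equiv> {x + y | x y. x \<in> P \<inter> U \<and> y \<in> hermitian_part st (gen_star_ideal smul st U K)}"

lemma R_eq_T: "R_mu smul st P J mu = Tset"
proof
  show "R_mu smul st P J mu \<subseteq> Tset"
  proof
    fix a assume a: "a \<in> R_mu smul st P J mu"
    have "a \<in> hermitian_part st U" using a unfolding R_mu_def by blast
    thus "a \<in> Tset" using R_sub_T[OF a] by blast
  qed
next
  show "Tset \<subseteq> R_mu smul st P J mu"
  proof
    fix a assume a: "a \<in> Tset"
    hence aU: "a \<in> U" and ah: "st a = a" and aT: "\<forall>psi\<in>E. 0 \<le> inn psi (pi a psi)"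
      unfolding hermitian_part_def by auto
    obtain x y where "a = x + y" "x \<in> P \<inter> U" "y \<in> hermitian_part st (gen_star_ideal smul st U K)"
      using T_sub_S[OF aU ah aT] by blast
    thus "a \<in> R_mu smul st P J mu" using S_sub_R by blast
  qed
qed

lemma S_eq_R: "Sset = R_mu smul st P J mu"
proof
  show "Sset \<subseteq> R_mu smul st P J mu" using S_sub_R by blast
next
  show "R_mu smul st P J mu \<subseteq> Sset"
  proof
    fix a assume "a \<in> R_mu smul st P J mu"
    hence a: "a \<in> Tset" using R_eq_T by blast
    hence aU: "a \<in> U" and ah: "st a = a" and aT: "\<forall>psi\<in>E. 0 \<le> inn psi (pi a psi)"
      unfolding hermitian_part_def by auto
    show "a \<in> Sset" using T_sub_S[OF aU ah aT] by blast
  qed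
qed

lemma herm_zero:
  assumes hU: "h \<in> U" and hh: "st h = h" and hz: "\<forall>y\<in>E. pi h y = 0"
    and eig: "eigenstate smul st P J mu \<omega>"
  shows "\<omega> h = 0"
proof -
  have w: "is_state smul st P U \<omega>" using eig unfolding eigenstate_def by blast
  have "h \<in> Tset" using hU hh hz unfolding hermitian_part_def by simp
  hence "h \<in> R_mu smul st P J mu" using R_eq_T by blast
  hence 1: "0 \<le> \<omega> h" using eig unfolding R_mu_def by blast
  have "- h \<in> Tset" using hU hh hz unfolding hermitian_part_def by (simp add: U_neg)
  hence "- h \<in> R_mu smul st P J mu" using R_eq_T by blast
  hence "0 \<le> \<omega> (- h)" using eig unfolding R_mu_def by blast
  hence 2: "\<omega> h \<le> 0" using state_neg[OF w hU] by simp
  show ?thesis using 1 2 by (rule antisym[rotated])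
qed

lemma V_char: "c \<in> V_mu smul st P J mu \<longleftrightarrow> c \<in> U \<and> (\<forall>x\<in>E. pi c x = 0)"
proof
  assume c: "c \<in> V_mu smul st P J mu"
  thus "c \<in> U \<and> (\<forall>x\<in>E. pi c x = 0)" using V_zero unfolding V_mu_def by blast
next
  assume "c \<in> U \<and> (\<forall>x\<in>E. pi c x = 0)"
  hence cU: "c \<in> U" and cz: "\<forall>x\<in>E. pi c x = 0" by auto
  have scU: "st c \<in> U" using cU by (rule U_st)
  have scz: "\<forall>y\<in>E. pi (st c) y = 0"
  proof
    fix y assume y: "y \<in> E"
    have "\<forall>x\<in>E. inn x (pi (st c) y) = 0"
    proof
      fix x assume x: "x \<in> E"
      have "inn x (pi (st c) y) = inn (pi c x) y" using pi_adj[of x "st c" y] by simp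
      thus "inn x (pi (st c) y) = 0" using cz x by simp
    qed
    thus "pi (st c) y = 0" using E_self_perp[OF pi_U_E[OF scU y]] by blast
  qed
  define h1 where "h1 = smul (1/2) (c + st c)"
  define h2 where "h2 = smul (- (\<i>/2)) (c - st c)"
  have h1U: "h1 \<in> U" unfolding h1_def using cU scU by (simp add: U_add U_smul)
  have h2U: "h2 \<in> U" unfolding h2_def using cU scU by (simp add: U_diff U_smul)
  have h1h: "st h1 = h1" unfolding h1_def by (simp add: add.commute)
  have h2h: "st h2 = h2" unfolding h2_def by (simp add: smul_lneg)
  have h1z: "\<forall>y\<in>E. pi h1 y = 0" unfolding h1_def using cz scz by simp
  have h2z: "\<forall>y\<in>E. pi h2 y = 0" unfolding h2_def using cz scz by simp
  have ceq: "c = h1 + smul \<i> h2"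
  proof -
    have "smul \<i> h2 = smul (1/2) (c - st c)" unfolding h2_def by simp
    hence "h1 + smul \<i> h2 = smul (1/2) c + smul (1/2) c" unfolding h1_def by simp
    also have "\<dots> = smul (1/2 + 1/2) c" by (simp only: smul_ladd)
    finally show ?thesis by simp
  qed
  show "c \<in> V_mu smul st P J mu"
    unfolding V_mu_def
  proof (intro CollectI conjI allI impI)
    show "c \<in> U" by (rule cU)
  next
    fix \<omega> assume eig: "eigenstate smul st P J mu \<omega>"
    have w: "is_state smul st P U \<omega>" using eig unfolding eigenstate_def by blast
    have "\<omega> c = \<omega> h1 + \<i> * \<omega> h2"
      unfolding ceq using state_basics(1)[OF w h1U U_smul[OF h2U]] state_basics(2)[OF w h2U] by simp
    thus "\<omega> c = 0" using herm_zero[OF h1U h1h h1z eig] herm_zero[OF h2U h2h h2z eig] by simp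
  qed
qed

lemma red_class_char:
  assumes a: "a \<in> U"
  shows "red_class smul st P J mu a = {b \<in> U. \<forall>x\<in>E. pi b x = pi a x}"
proof -
  have "(a - b \<in> V_mu smul st P J mu) = (\<forall>x\<in>E. pi b x = pi a x)" if b: "b \<in> U" for b
    using V_char[of "a - b"] U_diff[OF a b] by auto
  thus ?thesis unfolding red_class_def by auto
qed


definition pired :: "'a set \<Rightarrow> 'h \<Rightarrow> 'h" where
  "pired X x = pi (SOME a. a \<in> U \<and> X = red_class smul st P J mu a) x"

lemma pired_eq:
  assumes a: "a \<in> U" and x: "x \<in> E"
  shows "pired (red_class smul st P J mu a) x = pi a x"
proof -
  define a' where "a' = (SOME a'. a' \<in> U \<and> red_class smul st P J mu a = red_class smul st P J mu a')"
  have "a' \<in> U \<and> red_class smul st P J mu a = red_class smul st P J mu a'"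
    unfolding a'_def by (rule someI[of _ a]) (simp add: a)
  hence a'U: "a' \<in> U" and eq: "red_class smul st P J mu a = red_class smul st P J mu a'" by auto
  have "a' \<in> red_class smul st P J mu a'" using red_class_char[OF a'U] a'U by simp
  hence "a' \<in> red_class smul st P J mu a" using eq by simp
  hence "pi a' x = pi a x" using red_class_char[OF a] x by simp
  thus ?thesis unfolding pired_def a'_def by simp
qed

lemma red_eq_iff:
  assumes a: "a \<in> U" and b: "b \<in> U"
  shows "red_class smul st P J mu a = red_class smul st P J mu b \<longleftrightarrow> (\<forall>x\<in>E. pi a x = pi b x)"
proof
  assume eq: "red_class smul st P J mu a = red_class smul st P J mu b"
  have "a \<in> red_class smul st P J mu a" using red_class_char[OF a] a by simp
  thus "\<forall>x\<in>E. pi a x = pi b x" using eq red_class_char[OF b] by simp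
next
  assume "\<forall>x\<in>E. pi a x = pi b x"
  thus "red_class smul st P J mu a = red_class smul st P J mu b"
    unfolding red_class_char[OF a] red_class_char[OF b] by auto
qed


lemma pos_part:
  assumes X: "X \<in> red_algebra smul st P J mu"
  shows "X \<in> red_pos_cone smul st P J mu \<longleftrightarrow> pos_op_on E inn (pired X)"
proof -
  obtain a where aU: "a \<in> U" and Xa: "X = red_class smul st P J mu a"
    using X unfolding red_algebra_def by blast
  have pX: "\<forall>x\<in>E. pired X x = pi a x" using pired_eq[OF aU] Xa by simp
  show ?thesis
  proof
    assume "X \<in> red_pos_cone smul st P J mu"
    then obtain r where r: "r \<in> R_mu smul st P J mu" and Xr: "X = red_class smul st P J mu r"
      unfolding red_pos_cone_def by blast
    have rT: "r \<in> Tset" using r R_eq_T by blast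
    hence rU: "r \<in> U" and rh: "st r = r" and rp: "\<forall>x\<in>E. 0 \<le> inn x (pi r x)"
      unfolding hermitian_part_def by auto
    have pr: "\<forall>x\<in>E. pired X x = pi r x" using pired_eq[OF rU] Xr by simp
    show "pos_op_on E inn (pired X)"
      unfolding pos_op_on_def using pr rp pi_adj[of _ r] rh by simp
  next
    assume pos: "pos_op_on E inn (pired X)"
    have sym: "\<forall>x\<in>E. \<forall>y\<in>E. inn x (pi a y) = inn (pi a x) y"
      and pp: "\<forall>x\<in>E. 0 \<le> inn x (pi a x)"
      using pos pX unfolding pos_op_on_def by auto
    have sa: "pi (st a) y = pi a y" if y: "y \<in> E" for y
    proof -
      have "\<forall>x\<in>E. inn x (pi (st a) y - pi a y) = 0"
      proof
        fix x assume x: "x \<in> E"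
        have "inn x (pi (st a) y) = inn (pi a x) y" using pi_adj[of x "st a" y] by simp
        thus "inn x (pi (st a) y - pi a y) = 0" using sym x y by simp
      qed
      hence "pi (st a) y - pi a y = 0"
        using E_self_perp[OF E_diff[OF pi_U_E[OF U_st[OF aU] y] pi_U_E[OF aU y]]] by blast
      thus ?thesis by simp
    qed
    define r where "r = smul (1/2) (a + st a)"
    have rU: "r \<in> U" unfolding r_def using aU by (simp add: U_add U_smul U_st)
    have rh: "st r = r" unfolding r_def by (simp add: add.commute)
    have pr: "pi r y = pi a y" if y: "y \<in> E" for y
    proof -
      have "pi r y = hsmul (1/2) (pi a y) + hsmul (1/2) (pi a y)" unfolding r_def using sa[OF y] by simp
      also have "\<dots> = hsmul (1/2 + 1/2) (pi a y)" by (simp only: hsmul_ladd)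
      finally show ?thesis by simp
    qed
    have "r \<in> Tset" using rU rh pp pr unfolding hermitian_part_def by simp
    hence rR: "r \<in> R_mu smul st P J mu" using R_eq_T by blast
    have "red_class smul st P J mu r = X" unfolding Xa using red_eq_iff[OF rU aU] pr by simp
    thus "X \<in> red_pos_cone smul st P J mu" unfolding red_pos_cone_def using rR by blast
  qed
qed

lemma main:
  shows "{x + y | x y. x \<in> P \<inter> u1 J \<and>
                       y \<in> hermitian_part st (gen_star_ideal smul st (u1 J) (J_shift smul J mu))}
           = R_mu smul st P J mu
      \<and> R_mu smul st P J mu
           = {a \<in> hermitian_part st (u1 J).
                \<forall>x\<in>eigenspace hsmul (pi J) mu. 0 \<le> inn x (pi a x)}
      \<and> (\<exists>pired :: 'a set \<Rightarrow> 'h \<Rightarrow> 'h.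
           (\<forall>a\<in>u1 J. \<forall>x\<in>eigenspace hsmul (pi J) mu.
               pi a x \<in> eigenspace hsmul (pi J) mu \<and>
               pired (red_class smul st P J mu a) x = pi a x)
         \<and> (\<forall>X\<in>red_algebra smul st P J mu. \<forall>Y\<in>red_algebra smul st P J mu.
               (\<forall>x\<in>eigenspace hsmul (pi J) mu. pired X x = pired Y x) \<longrightarrow> X = Y)
         \<and> (\<forall>X\<in>red_algebra smul st P J mu. \<forall>x\<in>eigenspace hsmul (pi J) mu.
               \<forall>y\<in>eigenspace hsmul (pi J) mu. \<forall>c.
               pired X (x + y) = pired X x + pired X y \<and>
               pired X (hsmul c x) = hsmul c (pired X x))
         \<and> (\<forall>a\<in>u1 J. \<forall>b\<in>u1 J. \<forall>c. \<forall>x\<in>eigenspace hsmul (pi J) mu.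
               \<forall>y\<in>eigenspace hsmul (pi J) mu.
               pired (red_class smul st P J mu (a + b)) x
                 = pired (red_class smul st P J mu a) x + pired (red_class smul st P J mu b) x \<and>
               pired (red_class smul st P J mu (smul c a)) x
                 = hsmul c (pired (red_class smul st P J mu a) x) \<and>
               pired (red_class smul st P J mu (a * b)) x
                 = pired (red_class smul st P J mu a) (pired (red_class smul st P J mu b) x) \<and>
               pired (red_class smul st P J mu 1) x = x \<and>
               inn y (pired (red_class smul st P J mu a) x)
                 = inn (pired (red_class smul st P J mu (st a)) y) x)
         \<and> (\<forall>X\<in>red_algebra smul st P J mu.
               X \<in> red_pos_cone smul st P J mu \<longleftrightarrow>
               pos_op_on (eigenspace hsmul (pi J) mu) inn (pired X)))"
proof -
  have c1: "\<forall>a\<in>U. \<forall>x\<in>E. pi a x \<in> E \<and> pired (red_class smul st P J mu a) x = pi a x"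
    using pi_U_E pired_eq by blast
  have c2: "\<forall>X\<in>red_algebra smul st P J mu. \<forall>Y\<in>red_algebra smul st P J mu.
               (\<forall>x\<in>E. pired X x = pired Y x) \<longrightarrow> X = Y"
  proof (intro ballI impI)
    fix X Y assume X: "X \<in> red_algebra smul st P J mu" and Y: "Y \<in> red_algebra smul st P J mu"
      and h: "\<forall>x\<in>E. pired X x = pired Y x"
    obtain a where aU: "a \<in> U" and Xa: "X = red_class smul st P J mu a"
      using X unfolding red_algebra_def by blast
    obtain b where bU: "b \<in> U" and Yb: "Y = red_class smul st P J mu b"
      using Y unfolding red_algebra_def by blast
    have "\<forall>x\<in>E. pi a x = pi b x" using h pired_eq[OF aU] pired_eq[OF bU] Xa Yb by simp
    thus "X = Y" using red_eq_iff[OF aU bU] Xa Yb by simp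
  qed
  have c3: "\<forall>X\<in>red_algebra smul st P J mu. \<forall>x\<in>E. \<forall>y\<in>E. \<forall>c.
               pired X (x + y) = pired X x + pired X y \<and>
               pired X (hsmul c x) = hsmul c (pired X x)"
  proof (intro ballI allI)
    fix X x y c assume X: "X \<in> red_algebra smul st P J mu" and x: "x \<in> E" and y: "y \<in> E"
    obtain a where aU: "a \<in> U" and Xa: "X = red_class smul st P J mu a"
      using X unfolding red_algebra_def by blast
    show "pired X (x + y) = pired X x + pired X y \<and> pired X (hsmul c x) = hsmul c (pired X x)"
      using pired_eq[OF aU x] pired_eq[OF aU y] pired_eq[OF aU E_add[OF x y]] pired_eq[OF aU E_hsmul[OF x]] Xa
      by simp
  qed
  have c4: "\<forall>a\<in>U. \<forall>b\<in>U. \<forall>c. \<forall>x\<in>E. \<forall>y\<in>E.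
               pired (red_class smul st P J mu (a + b)) x
                 = pired (red_class smul st P J mu a) x + pired (red_class smul st P J mu b) x \<and>
               pired (red_class smul st P J mu (smul c a)) x
                 = hsmul c (pired (red_class smul st P J mu a) x) \<and>
               pired (red_class smul st P J mu (a * b)) x
                 = pired (red_class smul st P J mu a) (pired (red_class smul st P J mu b) x) \<and>
               pired (red_class smul st P J mu 1) x = x \<and>
               inn y (pired (red_class smul st P J mu a) x)
                 = inn (pired (red_class smul st P J mu (st a)) y) x"
  proof (intro ballI allI)
    fix a b c x y assume aU: "a \<in> U" and bU: "b \<in> U" and x: "x \<in> E" and y: "y \<in> E"
    show "pired (red_class smul st P J mu (a + b)) x
                 = pired (red_class smul st P J mu a) x + pired (red_class smul st P J mu b) x \<and>
               pired (red_class smul st P J mu (smul c a)) x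
                 = hsmul c (pired (red_class smul st P J mu a) x) \<and>
               pired (red_class smul st P J mu (a * b)) x
                 = pired (red_class smul st P J mu a) (pired (red_class smul st P J mu b) x) \<and>
               pired (red_class smul st P J mu 1) x = x \<and>
               inn y (pired (red_class smul st P J mu a) x)
                 = inn (pired (red_class smul st P J mu (st a)) y) x"
      using pired_eq[OF U_add[OF aU bU] x] pired_eq[OF aU x] pired_eq[OF bU x]
        pired_eq[OF U_smul[OF aU] x] pired_eq[OF U_mult[OF aU bU] x]
        pired_eq[OF aU pi_U_E[OF bU x]] pired_eq[OF U_1 x] pired_eq[OF U_st[OF aU] y]
        pi_adj[of y a x]
      by simp
  qed
  have c5: "\<forall>X\<in>red_algebra smul st P J mu.
               X \<in> red_pos_cone smul st P J mu \<longleftrightarrow> pos_op_on E inn (pired X)"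
    using pos_part by blast
  show ?thesis
    using S_eq_R R_eq_T c1 c2 c3 c4 c5 by blast
qed

end

theorem proposition3p1:
  fixes smul :: "complex \<Rightarrow> 'a::ring_1 \<Rightarrow> 'a"
    and st :: "'a \<Rightarrow> 'a"
    and P :: "'a set"
    and J :: 'a
    and hsmul :: "complex \<Rightarrow> 'h::ab_group_add \<Rightarrow> 'h"
    and inn :: "'h \<Rightarrow> 'h \<Rightarrow> complex"
    and \<pi> :: "'a \<Rightarrow> 'h \<Rightarrow> 'h"
    and \<mu> :: real
  assumes alg: "star_algebra smul st"
    and qm: "quadratic_module st P"
    and supp0: "supp P = {0}"
    and J_herm: "st J = J"
    and ph: "pre_hilbert hsmul inn"
    and rep: "star_rep smul st hsmul inn \<pi>"
    and inj: "inj \<pi>"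
    and P_eq: "P = {a. pos_op_on UNIV inn (\<pi> a)}"
    and decomp: "\<forall>x. \<exists>e\<in>eigenspace hsmul (\<pi> J) \<mu>.
                     \<exists>f\<in>orth_compl inn (eigenspace hsmul (\<pi> J) \<mu>). x = e + f"
    and gap: "\<exists>\<epsilon>>0. \<forall>f\<in>orth_compl inn (eigenspace hsmul (\<pi> J) \<mu>).
                 complex_of_real \<epsilon> * inn f f
                   \<le> inn f (\<pi> (J_shift smul J \<mu> * J_shift smul J \<mu>) f)"
  shows "{x + y | x y. x \<in> P \<inter> u1 J \<and>
                       y \<in> hermitian_part st (gen_star_ideal smul st (u1 J) (J_shift smul J \<mu>))}
           = R_mu smul st P J \<mu>
      \<and> R_mu smul st P J \<mu>
           = {a \<in> hermitian_part st (u1 J).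
                \<forall>x\<in>eigenspace hsmul (\<pi> J) \<mu>. 0 \<le> inn x (\<pi> a x)}
      \<and> (\<exists>pired :: 'a set \<Rightarrow> 'h \<Rightarrow> 'h.
           (\<forall>a\<in>u1 J. \<forall>x\<in>eigenspace hsmul (\<pi> J) \<mu>.
               \<pi> a x \<in> eigenspace hsmul (\<pi> J) \<mu> \<and>
               pired (red_class smul st P J \<mu> a) x = \<pi> a x)
         \<and> (\<forall>X\<in>red_algebra smul st P J \<mu>. \<forall>Y\<in>red_algebra smul st P J \<mu>.
               (\<forall>x\<in>eigenspace hsmul (\<pi> J) \<mu>. pired X x = pired Y x) \<longrightarrow> X = Y)
         \<and> (\<forall>X\<in>red_algebra smul st P J \<mu>. \<forall>x\<in>eigenspace hsmul (\<pi> J) \<mu>.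
               \<forall>y\<in>eigenspace hsmul (\<pi> J) \<mu>. \<forall>c.
               pired X (x + y) = pired X x + pired X y \<and>
               pired X (hsmul c x) = hsmul c (pired X x))
         \<and> (\<forall>a\<in>u1 J. \<forall>b\<in>u1 J. \<forall>c. \<forall>x\<in>eigenspace hsmul (\<pi> J) \<mu>.
               \<forall>y\<in>eigenspace hsmul (\<pi> J) \<mu>.
               pired (red_class smul st P J \<mu> (a + b)) x
                 = pired (red_class smul st P J \<mu> a) x + pired (red_class smul st P J \<mu> b) x \<and>
               pired (red_class smul st P J \<mu> (smul c a)) x
                 = hsmul c (pired (red_class smul st P J \<mu> a) x) \<and>
               pired (red_class smul st P J \<mu> (a * b)) x
                 = pired (red_class smul st P J \<mu> a) (pired (red_class smul st P J \<mu> b) x) \<and>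
               pired (red_class smul st P J \<mu> 1) x = x \<and>
               inn y (pired (red_class smul st P J \<mu> a) x)
                 = inn (pired (red_class smul st P J \<mu> (st a)) y) x)
         \<and> (\<forall>X\<in>red_algebra smul st P J \<mu>.
               X \<in> red_pos_cone smul st P J \<mu> \<longleftrightarrow>
               pos_op_on (eigenspace hsmul (\<pi> J) \<mu>) inn (pired X)))"
proof -
  interpret S: setting smul st P J hsmul inn \<pi> \<mu>
    by (rule setting.intro[OF alg qm J_herm ph rep P_eq decomp gap])
  show ?thesis by (rule S.main)
qed

end
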